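(* In the Simon urn described in the context, with fixed trigger probability $p\in(0,1)$, for every integer $c\ge2$ the series $$\Lambda_\infty(c,p)=\sum_{i=c+1}^{\infty}\binom{i-2}{c-2}\frac{(1-p)^i\,\Gamma(i)}{\Gamma(i+1-p)}$$ converges, and as $n\to\infty$, $$\mathbb E[K_{n,c}]\sim p^{c-1}\left(\frac{\Lambda_\infty(c,p)}{(1-p)^c}+\frac{\Gamma(c)}{\Gamma(c-p+1)}\right)n^{1-p}.$$
   Context: Simon urn. The urn is empty at time $0$. Let $B_0=1$ and let $(B_n)_{n\ge1}$ be i.i.d. Bernoulli random variables with $\Pr(B_n=1)=p\in(0,1)$, independent of everything else. Colors are labelled $1,2,\dots$ in order of first appearance. At each time $n\ge1$: if $B_{n-1}=1$, one ball of a new color is added and registered; if $B_{n-1}=0$, a ball is drawn uniformly at random from the urn, its color is registered, and one additional ball of that color is added. $K_{n,c}$ denotes the number of times color $c$ has been registered up to and including time $n$ (equal to the number of balls of color $c$ at time $n$), with $K_{n,c}=0$ if color $c$ has not yet appeared. $\Gamma$ is the gamma function; $a_n\sim b_n$ means $a_n/b_n\to1$. *)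

theory Defs
  imports "HOL-Probability.Probability" "HOL-Library.Landau_Symbols"
begin

text \<open>State of the Simon urn after time n: (urn contents as a multiset of colour labels,
  number of colours seen so far, the Bernoulli variable B_n governing step n+1).
  Colours are labelled 1,2,... in order of first appearance.\<close>
type_synonym simon_state = "nat multiset \<times> nat \<times> bool"

definition simon_step :: "real \<Rightarrow> simon_state \<Rightarrow> simon_state pmf" where
  "simon_step p s = (case s of (U, m, b) \<Rightarrow>
     do {
       (U', m') \<leftarrow> (if b then return_pmf (U + {#Suc m#}, Suc m)
                    else map_pmf (\<lambda>c. (U + {#c#}, m)) (pmf_of_multiset U));
       b' \<leftarrow> bernoulli_pmf p;
       return_pmf (U', m', b')
     })"

fun simon_dist :: "real \<Rightarrow> nat \<Rightarrow> simon_state pmf" where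
  "simon_dist p 0 = return_pmf ({#}, 0, True)"
| "simon_dist p (Suc n) = simon_dist p n \<bind> simon_step p"

definition K :: "nat \<Rightarrow> simon_state \<Rightarrow> nat" where
  "K c s = count (fst s) c"

definition simon_EK :: "real \<Rightarrow> nat \<Rightarrow> nat \<Rightarrow> real" where
  "simon_EK p n c = measure_pmf.expectation (simon_dist p n) (\<lambda>s. real (K c s))"

definition Lambda_term :: "nat \<Rightarrow> real \<Rightarrow> nat \<Rightarrow> real" where
  "Lambda_term c p i = real ((i - 2) choose (c - 2)) * (1 - p) ^ i * Gamma (real i) / Gamma (real i + 1 - p)"

definition Lambda_inf :: "nat \<Rightarrow> real \<Rightarrow> real" where
  "Lambda_inf c p = (\<Sum>k. Lambda_term c p (k + c + 1))"

end

theory Submission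
  imports Defs "HOL-Real_Asymp.Real_Asymp"
begin


lemma exp_bind_fin:
  fixes f :: "_ \<Rightarrow> real"
  assumes "finite (set_pmf M)" "\<And>x. x \<in> set_pmf M \<Longrightarrow> finite (set_pmf (N x))"
  shows "measure_pmf.expectation (M \<bind> N) f = measure_pmf.expectation M (\<lambda>x. measure_pmf.expectation (N x) f)"
proof -
  have "measure_pmf.expectation (M \<bind> N) f = (\<Sum>a\<in>set_pmf M. pmf M a *\<^sub>R measure_pmf.expectation (N a) f)"
    using assms by (intro pmf_expectation_bind) auto
  also have "\<dots> = measure_pmf.expectation M (\<lambda>x. measure_pmf.expectation (N x) f)"
    using assms by (subst integral_measure_pmf[of "set_pmf M"]) auto
  finally show ?thesis .
qed

lemma step_set:
  assumes "s \<in> set_pmf (simon_step p (U, m, b))"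
  shows "\<exists>x b'. s = (U + {#x#}, (if b then Suc m else m), b')"
  using assms unfolding simon_step_def
  apply (cases b)
  apply simp_all
  apply blast
  apply auto
  done

lemma step_alt:
  "simon_step p (U, m, b) = (if b then map_pmf (\<lambda>b'. (U + {#Suc m#}, Suc m, b')) (bernoulli_pmf p)
     else pmf_of_multiset U \<bind> (\<lambda>x. map_pmf (\<lambda>b'. (U + {#x#}, m, b')) (bernoulli_pmf p)))"
  unfolding simon_step_def
  by (cases b) (simp_all add: map_pmf_def bind_return_pmf bind_assoc_pmf)

lemma step_fin:
  assumes "b \<or> U \<noteq> {#}"
  shows "finite (set_pmf (simon_step p (U, m, b)))"
proof (cases b)
  case True
  have "set_pmf (simon_step p (U, m, b)) \<subseteq> (\<lambda>b'. (U + {#Suc m#}, Suc m, b')) ` UNIV"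
    using True by (auto simp add: step_alt)
  then show ?thesis by (rule finite_subset) simp
next
  case False
  then have "U \<noteq> {#}" using assms by simp
  then have "set_pmf (simon_step p (U, m, b)) \<subseteq> (\<lambda>(x, b'). (U + {#x#}, m, b')) ` (set_mset U \<times> UNIV)"
    using False by (auto simp add: step_alt)
  then show ?thesis by (rule finite_subset) simp
qed

lemma simon_inv:
  "s \<in> set_pmf (simon_dist p n) \<Longrightarrow> size (fst s) = n \<and> (n = 0 \<longrightarrow> snd (snd s))"
proof (induction n arbitrary: s)
  case 0
  then show ?case by simp
next
  case (Suc n)
  then obtain s0 where s0: "s0 \<in> set_pmf (simon_dist p n)" "s \<in> set_pmf (simon_step p s0)" by auto
  obtain U m b where s0e: "s0 = (U, m, b)" by (cases s0) auto
  from Suc.IH[OF s0(1)] s0e have "size U = n" by simp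
  moreover from step_set[of s p U m b] s0(2) s0e obtain x b' where "s = (U + {#x#}, (if b then Suc m else m), b')"
    by auto
  ultimately show ?case by simp
qed

lemma simon_good:
  assumes "s \<in> set_pmf (simon_dist p n)"
  shows "snd (snd s) \<or> fst s \<noteq> {#}"
  using simon_inv[OF assms] by (cases n) auto

lemma simon_fin: "finite (set_pmf (simon_dist p n))"
proof (induction n)
  case 0
  then show ?case by simp
next
  case (Suc n)
  have "finite (set_pmf (simon_step p s))" if "s \<in> set_pmf (simon_dist p n)" for s
  proof -
    obtain U m b where s: "s = (U, m, b)" by (cases s) auto
    show ?thesis using simon_good[OF that] unfolding s by (intro step_fin) simp
  qed
  then show ?case using Suc by simp
qed

definition HH :: "real \<Rightarrow> (simon_state \<Rightarrow> real) \<Rightarrow> nat multiset \<Rightarrow> nat \<Rightarrow> real" where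
  "HH p f U m = p * f (U, m, True) + (1 - p) * f (U, m, False)"

lemma step_exp:
  fixes f :: "simon_state \<Rightarrow> real"
  assumes p: "0 \<le> p" "p \<le> 1" and g: "b \<or> U \<noteq> {#}"
  shows "measure_pmf.expectation (simon_step p (U, m, b)) f =
     (if b then HH p f (U + {#Suc m#}) (Suc m)
      else measure_pmf.expectation (pmf_of_multiset U) (\<lambda>x. HH p f (U + {#x#}) m))"
proof (cases b)
  case True
  then show ?thesis using p by (simp add: step_alt HH_def)
next
  case False
  then have "U \<noteq> {#}" using g by simp
  then show ?thesis using p False
    by (simp add: step_alt HH_def exp_bind_fin mult.commute)
qed

lemma exp_cong:
  fixes f g :: "_ \<Rightarrow> real"
  shows "(\<And>x. x \<in> set_pmf M \<Longrightarrow> f x = g x) \<Longrightarrow> measure_pmf.expectation M f = measure_pmf.expectation M g"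
  by (rule integral_cong_AE) (auto simp: AE_measure_pmf_iff)

lemma dist_Suc_exp:
  fixes f :: "simon_state \<Rightarrow> real"
  assumes p: "0 \<le> p" "p \<le> 1"
  shows "measure_pmf.expectation (simon_dist p (Suc n)) f =
    measure_pmf.expectation (simon_dist p n) (\<lambda>s. if snd (snd s) then HH p f (fst s + {#Suc (fst (snd s))#}) (Suc (fst (snd s)))
      else measure_pmf.expectation (pmf_of_multiset (fst s)) (\<lambda>x. HH p f (fst s + {#x#}) (fst (snd s))))" (is "_ = ?R")
proof -
  have "measure_pmf.expectation (simon_dist p (Suc n)) f =
     measure_pmf.expectation (simon_dist p n) (\<lambda>s. measure_pmf.expectation (simon_step p s) f)"
    unfolding simon_dist.simps(2)
  proof (rule exp_bind_fin[OF simon_fin])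
    fix s assume s: "s \<in> set_pmf (simon_dist p n)"
    obtain U m b where se: "s = (U, m, b)" by (cases s) auto
    show "finite (set_pmf (simon_step p s))" using simon_good[OF s] unfolding se by (intro step_fin) simp
  qed
  also have "\<dots> = ?R" 
  proof (rule exp_cong)
    fix s assume s: "s \<in> set_pmf (simon_dist p n)"
    obtain U m b where se: "s = (U, m, b)" by (cases s) auto
    show "measure_pmf.expectation (simon_step p s) f = (if snd (snd s) then HH p f (fst s + {#Suc (fst (snd s))#}) (Suc (fst (snd s)))
      else measure_pmf.expectation (pmf_of_multiset (fst s)) (\<lambda>x. HH p f (fst s + {#x#}) (fst (snd s))))"
      using simon_good[OF s] p unfolding se by (simp add: step_exp)
  qed
  finally show ?thesis .
qed

lemma HH_idem: "HH p (\<lambda>s. HH p f (fst s) (fst (snd s))) U m = HH p f U m"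
  by (simp add: HH_def algebra_simps)

lemma RS:
  fixes f :: "simon_state \<Rightarrow> real"
  assumes p: "0 \<le> p" "p \<le> 1"
  shows "measure_pmf.expectation (simon_dist p (Suc n)) f =
    measure_pmf.expectation (simon_dist p (Suc n)) (\<lambda>s. HH p f (fst s) (fst (snd s)))"
  by (simp only: dist_Suc_exp[OF p, of n]) (simp only: HH_idem)

lemma main_step:
  fixes f :: "simon_state \<Rightarrow> real"
  assumes p: "0 \<le> p" "p \<le> 1" and n: "n \<ge> 1"
  shows "measure_pmf.expectation (simon_dist p (Suc n)) f =
    measure_pmf.expectation (simon_dist p n) (\<lambda>s. p * HH p f (fst s + {#Suc (fst (snd s))#}) (Suc (fst (snd s)))
      + (1 - p) * measure_pmf.expectation (pmf_of_multiset (fst s)) (\<lambda>x. HH p f (fst s + {#x#}) (fst (snd s))))"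
proof -
  obtain k where k: "n = Suc k" using n by (cases n) auto
  show ?thesis
    unfolding dist_Suc_exp[OF p, of n f] unfolding k
    by (subst RS[OF p]) (simp add: HH_def)
qed



definition Q :: "real \<Rightarrow> nat \<Rightarrow> nat \<Rightarrow> real" where
  "Q p n j = measure_pmf.expectation (simon_dist p n) (\<lambda>s. of_bool (fst (snd s) = j))"

lemma integrable_dist[simp]: "integrable (measure_pmf (simon_dist p n)) (f :: _ \<Rightarrow> real)"
  by (rule integrable_measure_pmf_finite[OF simon_fin])

lemma Q1: assumes "0 \<le> p" "p \<le> 1" shows "Q p 1 j = of_bool (j = 1)"
  using assms by (simp add: Q_def step_alt bind_return_pmf)

lemma EK1: assumes "0 \<le> p" "p \<le> 1" "c \<ge> 2" shows "simon_EK p 1 c = 0"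
  using assms by (simp add: simon_EK_def K_def step_alt bind_return_pmf)

lemma exp_const_pmf: "measure_pmf.expectation M (\<lambda>_. c::real) = c"
  by simp

lemma QSuc:
  assumes p: "0 \<le> p" "p \<le> 1" and n: "n \<ge> 1"
  shows "Q p (Suc n) j = p * (if j = 0 then 0 else Q p n (j - 1)) + (1 - p) * Q p n j"
proof -
  have "Q p (Suc n) j = measure_pmf.expectation (simon_dist p n)
     (\<lambda>s. p * of_bool (Suc (fst (snd s)) = j) + (1 - p) * of_bool (fst (snd s) = j))"
    unfolding Q_def by (subst main_step[OF p n]) (simp add: HH_def algebra_simps)
  also have "\<dots> = p * measure_pmf.expectation (simon_dist p n) (\<lambda>s. of_bool (Suc (fst (snd s)) = j))
     + (1 - p) * Q p n j"
    unfolding Q_def by simp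
  also have "measure_pmf.expectation (simon_dist p n) (\<lambda>s. of_bool (Suc (fst (snd s)) = j)) =
     (if j = 0 then 0 else Q p n (j - 1))"
    unfolding Q_def by (cases j) simp_all
  finally show ?thesis .
qed

lemma mset_exp:
  assumes "U \<noteq> {#}"
  shows "measure_pmf.expectation (pmf_of_multiset U) (\<lambda>x. real (count (U + {#x#}) c)) =
    real (count U c) + real (count U c) / real (size U)"
proof -
  have "measure_pmf.expectation (pmf_of_multiset U) (\<lambda>x. real (count (U + {#x#}) c)) =
     measure_pmf.expectation (pmf_of_multiset U) (\<lambda>x. real (count U c) + indicator {c} x)"
    by (rule exp_cong) (simp add: indicator_def)
  also have "\<dots> = real (count U c) + measure_pmf.expectation (pmf_of_multiset U) (indicator {c})"
    using assms by (subst Bochner_Integration.integral_add) (auto intro!: integrable_measure_pmf_finite)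
  also have "measure_pmf.expectation (pmf_of_multiset U) (indicator {c}) = real (count U c) / real (size U)"
    using assms by (simp add: measure_pmf_single)
  finally show ?thesis .
qed

lemma EKSuc:
  assumes p: "0 \<le> p" "p \<le> 1" and n: "n \<ge> 1" and c: "c \<ge> 2"
  shows "simon_EK p (Suc n) c = simon_EK p n c * (1 + (1 - p) / n) + p * Q p n (c - 1)"
proof -
  have "simon_EK p (Suc n) c = measure_pmf.expectation (simon_dist p n)
     (\<lambda>s. p * (real (count (fst s) c) + of_bool (fst (snd s) = c - 1)) + (1 - p) * (real (count (fst s) c) + real (count (fst s) c) / real n))"
    unfolding simon_EK_def K_def
  proof (subst main_step[OF p n], rule exp_cong)
    fix s assume s: "s \<in> set_pmf (simon_dist p n)"
    have sz: "size (fst s) = n" using simon_inv[OF s] by simp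
    then have ne: "fst s \<noteq> {#}" using n by auto
    have e: "(Suc (fst (snd s)) = c) = (fst (snd s) = c - 1)" using c by auto
    then show "p * HH p (\<lambda>s. real (count (fst s) c)) (fst s + {#Suc (fst (snd s))#}) (Suc (fst (snd s))) +
         (1 - p) * measure_pmf.expectation (pmf_of_multiset (fst s)) (\<lambda>x. HH p (\<lambda>s. real (count (fst s) c)) (fst s + {#x#}) (fst (snd s))) =
         p * (real (count (fst s) c) + of_bool (fst (snd s) = c - 1)) + (1 - p) * (real (count (fst s) c) + real (count (fst s) c) / real n)"
      using mset_exp[OF ne, of c] sz by (simp only: HH_def) (simp add: algebra_simps e)
  qed
  also have "\<dots> = simon_EK p n c * (1 + (1 - p) / n) + p * Q p n (c - 1)"
    unfolding simon_EK_def K_def Q_def by (simp add: algebra_simps add_divide_distrib)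
  finally show ?thesis .
qed



lemma Q0: "Q p 0 j = of_bool (j = 0)"
  by (simp add: Q_def)

lemma Qform:
  assumes p: "0 \<le> p" "p \<le> 1"
  shows "Q p (Suc n) 0 = 0 \<and> (\<forall>j. Q p (Suc n) (Suc j) = real (n choose j) * p ^ j * (1 - p) ^ (n - j))"
proof (induction n)
  case 0
  then show ?case using Q1[OF p] by auto
next
  case (Suc n)
  have A: "Q p (Suc (Suc n)) 0 = 0" using Suc QSuc[OF p, of "Suc n" 0] by simp
  have B: "Q p (Suc (Suc n)) (Suc j) = real (Suc n choose j) * p ^ j * (1 - p) ^ (Suc n - j)" for j
  proof (cases j)
    case 0
    then show ?thesis using Suc QSuc[OF p, of "Suc n" "Suc 0"] by simp
  next
    case (Suc j')
    have rec: "Q p (Suc (Suc n)) (Suc j) = p * (real (n choose j') * p ^ j' * (1 - p) ^ (n - j'))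
       + (1 - p) * (real (n choose Suc j') * p ^ Suc j' * (1 - p) ^ (n - Suc j'))"
    proof -
      have q1: "Q p (Suc (Suc n)) (Suc j) = p * Q p (Suc n) (Suc j') + (1-p) * Q p (Suc n) (Suc (Suc j'))"
        using QSuc[OF p, of "Suc n" "Suc j"] Suc by simp
      show ?thesis unfolding q1 Suc.IH[THEN conjunct2, rule_format] ..
    qed
    show ?thesis
    proof (cases "j' < n")
      case True
      then have e: "n - j' = Suc (n - Suc j')" by simp
      show ?thesis unfolding rec unfolding Suc by (simp add: e algebra_simps)
    next
      case False
      then have z: "n choose Suc j' = 0" by simp
      show ?thesis
      proof (cases "j' = n")
        case True
        then show ?thesis unfolding rec unfolding Suc by (simp add: z)
      next
        case False
        then have "n choose j' = 0" "Suc n choose Suc j' = 0" using \<open>\<not> j' < n\<close> by simp_all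
        then show ?thesis unfolding rec unfolding Suc by (simp add: z)
      qed
    qed
  qed
  show ?case using A B by blast
qed



definition PP :: "real \<Rightarrow> nat \<Rightarrow> real" where
  "PP p n = Gamma (real n + 1 - p) / Gamma (real n)"

lemma pos_not_nonpos_Int: "(x::real) > 0 \<Longrightarrow> x \<notin> \<int>\<^sub>\<le>\<^sub>0"
  using nonpos_Ints_nonpos by force

lemma PP_pos: "p < 1 \<Longrightarrow> n \<ge> 1 \<Longrightarrow> PP p n > 0"
  unfolding PP_def by (intro divide_pos_pos Gamma_real_pos) auto

lemma PP_Suc:
  assumes "p < 1" "n \<ge> 1"
  shows "PP p (Suc n) = PP p n * (1 + (1 - p) / n)"
proof -
  have g1: "Gamma (real (Suc n) + 1 - p) = (real n + 1 - p) * Gamma (real n + 1 - p)"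
    using Gamma_plus1[OF pos_not_nonpos_Int, of "real n + 1 - p"] assms by (simp add: algebra_simps)
  have g2: "Gamma (real (Suc n)) = real n * Gamma (real n)"
    using Gamma_plus1[OF pos_not_nonpos_Int, of "real n"] assms by (simp add: algebra_simps)
  have "Gamma (real n) > 0" using assms by (intro Gamma_real_pos) auto
  then show ?thesis unfolding PP_def g1 g2 using assms by (simp add: field_simps)
qed

lemma PP_mono:
  assumes "p < 1" "1 \<le> m" "m \<le> n"
  shows "PP p m \<le> PP p n"
  using assms(3)
proof (induction n rule: dec_induct)
  case base
  then show ?case by simp
next
  case (step n)
  have "n \<ge> 1" using step assms by simp
  then have "PP p n \<le> PP p n * (1 + (1 - p) / n)" using PP_pos[OF assms(1)] assms(1)
    by (simp add: field_simps)
  then show ?case using step PP_Suc[OF assms(1) \<open>n \<ge> 1\<close>] by simp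
qed

lemma PP_lim:
  assumes p: "0 < p" "p < 1"
  shows "(\<lambda>n. PP p n / real n powr (1 - p)) \<longlonglongrightarrow> 1"
proof -
  have G0: "Gamma (1 - p) \<noteq> 0" using p by (simp add: Gamma_eq_zero_iff pos_not_nonpos_Int)
  have lim: "(\<lambda>n. Gamma (1 - p) / Gamma_series' (1 - p) n) \<longlonglongrightarrow> Gamma (1 - p) / Gamma (1 - p)"
    using G0 by (intro tendsto_divide tendsto_const Gamma_series'_LIMSEQ)
  have ev: "eventually (\<lambda>n. Gamma (1 - p) / Gamma_series' (1 - p) n = PP p n / real n powr (1 - p)) sequentially"
    using eventually_ge_at_top[of 1]
  proof eventually_elim
    case (elim n)
    have f: "fact (n - 1) = Gamma (real n)"
      using Gamma_fact[of "n - 1", where 'a = real] elim by (simp add: of_nat_diff)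
    have e: "exp ((1 - p) * ln (real n)) = real n powr (1 - p)"
      using elim by (simp add: powr_def)
    have ph: "pochhammer (1 - p) n = Gamma (real n + 1 - p) / Gamma (1 - p)"
      using pochhammer_Gamma[OF pos_not_nonpos_Int, of "1 - p" n] p by (simp add: algebra_simps)
    have gpos: "Gamma (real n) > 0" "Gamma (real n + 1 - p) > 0" "real n powr (1 - p) > 0"
      using elim p by auto
    show ?case unfolding Gamma_series'_def f PP_def ph using e gpos G0
      by (simp add: field_simps)
  qed
  show ?thesis using Lim_transform_eventually[OF lim ev] G0 by simp
qed

lemma summable_choose:
  assumes "0 \<le> x" "x < (1::real)"
  shows "summable (\<lambda>n. real (n choose d) * x ^ n)"
proof -
  have lim: "(\<lambda>n. norm (real (n choose d)) / norm (real (Suc n choose d))) \<longlonglongrightarrow> 1"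
  proof -
    have "(\<lambda>n. (real n + 1 - real d) / (real n + 1)) \<longlonglongrightarrow> 1" by real_asymp
    moreover have "eventually (\<lambda>n. (real n + 1 - real d) / (real n + 1) = norm (real (n choose d)) / norm (real (Suc n choose d))) sequentially"
      using eventually_ge_at_top[of d]
    proof eventually_elim
      case (elim n)
      have "(Suc n - d) * (Suc n choose d) = Suc n * (n choose d)"
        using binomial_absorb_comp[of "Suc n" d] by simp
      then have "real (Suc n - d) * real (Suc n choose d) = real (Suc n) * real (n choose d)"
        by (metis of_nat_mult)
      moreover have "real (Suc n choose d) > 0" using elim by simp
      moreover have "real (Suc n - d) = real n + 1 - real d" using elim by (simp add: of_nat_diff)
      ultimately show ?case by (simp add: field_simps)
    qed
    ultimately show ?thesis by (rule Lim_transform_eventually)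
  qed
  have "conv_radius (\<lambda>n. real (n choose d)) = 1"
    by (rule conv_radius_ratio_limit_nonzero[OF _ _ lim]) simp_all
  then show ?thesis using assms by (intro summable_in_conv_radius) simp
qed



definition aa :: "real \<Rightarrow> nat \<Rightarrow> nat \<Rightarrow> real" where
  "aa p c t = p * Q p t (c - 1) / PP p (Suc t)"

lemma EK_form:
  assumes p: "0 < p" "p < 1" and c: "c \<ge> 2" and n: "n \<ge> 1"
  shows "simon_EK p n c = PP p n * (\<Sum>t<n. aa p c t)"
  using n
proof (induction n rule: dec_induct)
  case base
  then show ?case using EK1[of p c] p c by (simp add: aa_def Q0)
next
  case (step n)
  have n1: "n \<ge> 1" using step by simp
  have pos: "PP p (Suc n) > 0" using PP_pos p by simp
  have "simon_EK p (Suc n) c = simon_EK p n c * (1 + (1 - p) / n) + p * Q p n (c - 1)"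
    using EKSuc[of p n c] p c n1 by simp
  also have "\<dots> = PP p (Suc n) * (\<Sum>t<n. aa p c t) + PP p (Suc n) * aa p c n"
  proof -
    have a: "PP p (Suc n) * aa p c n = p * Q p n (c - 1)" using pos by (simp add: aa_def)
    have b: "simon_EK p n c * (1 + (1 - p) / n) = PP p (Suc n) * (\<Sum>t<n. aa p c t)"
      unfolding step.IH PP_Suc[OF p(2) n1] by simp
    show ?thesis unfolding a b ..
  qed
  also have "\<dots> = PP p (Suc n) * (\<Sum>t<Suc n. aa p c t)"
    by (simp add: algebra_simps)
  finally show ?case .
qed

lemma Lambda_alt:
  "Lambda_term c p i = real ((i - 2) choose (c - 2)) * (1 - p) ^ i / PP p i"
  by (simp add: Lambda_term_def PP_def)

lemma aa_small:
  assumes p: "0 < p" "p < 1" and c: "c \<ge> 2" and t: "t < c - 1"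
  shows "aa p c t = 0"
proof (cases t)
  case 0
  then show ?thesis using c by (simp add: aa_def Q0)
next
  case (Suc n)
  have cc: "c - 1 = Suc (c - 2)" using c by simp
  have "n < c - 2" using t Suc by simp
  then show ?thesis using Qform[of p n] p unfolding aa_def Suc cc by simp
qed

lemma aa_mid:
  assumes p: "0 < p" "p < 1" and c: "c \<ge> 2"
  shows "aa p c (c - 1) = p ^ (c - 1) / PP p c"
proof -
  have cc: "c - 1 = Suc (c - 2)" "Suc (c - 1) = c" using c by simp_all
  have "Q p (c - 1) (c - 1) = p ^ (c - 2)"
    using Qform[of p "c - 2"] p unfolding cc(1) by simp
  then show ?thesis unfolding aa_def using cc by (simp add: power_Suc[symmetric] del: power_Suc)
qed

lemma aux_eq: "x \<noteq> 0 \<Longrightarrow> (a::real) * (C * b * y) / P = (a * b) / x * (C * (y * x) / P)"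
  by (simp add: field_simps)

lemma aa_tail:
  assumes p: "0 < p" "p < 1" and c: "c \<ge> 2"
  shows "aa p c (k + c) = p ^ (c - 1) / (1 - p) ^ c * Lambda_term c p (k + c + 1)"
proof -
  have e1: "k + c = Suc (k + c - 1)" "c - 1 = Suc (c - 2)" using c by simp_all
  have q: "Q p (k + c) (c - 1) = real ((k + c - 1) choose (c - 2)) * p ^ (c - 2) * (1 - p) ^ (k + 1)"
  proof -
    have "Q p (k + c) (c - 1) = real ((k + c - 1) choose (c - 2)) * p ^ (c - 2) * (1 - p) ^ (k + c - 1 - (c - 2))"
      using Qform[of p "k + c - 1"] p unfolding e1(2) by (subst e1(1)) simp
    moreover have "k + c - 1 - (c - 2) = k + 1" using c by simp
    ultimately show ?thesis by simp
  qed
  have e2: "k + c + 1 - 2 = k + c - 1" using c by simp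
  have pw1: "p * p ^ (c - 2) = p ^ (c - 1)" using c by (metis e1(2) power_Suc)
  have pw2: "(1 - p) ^ (k + c + 1) = (1 - p) ^ (k + 1) * (1 - p) ^ c"
    by (simp add: power_add[symmetric])
  have pos: "PP p (k + c + 1) > 0" "(1 - p) ^ c > 0" using PP_pos p by auto
  have ne: "(1 - p) ^ c \<noteq> 0" using pos p by simp
  show ?thesis unfolding aa_def Lambda_alt q e2 pw2 unfolding aux_eq[OF ne] unfolding pw1 by simp
qed



lemma Lambda_nonneg:
  assumes "p < 1" "i \<ge> 1" shows "Lambda_term c p i \<ge> 0"
  unfolding Lambda_alt using PP_pos[OF assms] assms by simp

lemma Lambda_summable:
  assumes p: "0 < p" "p < 1" and c: "c \<ge> 2"
  shows "summable (\<lambda>k. Lambda_term c p (k + c + 1))"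
proof (rule summable_comparison_test')
  let ?h = "\<lambda>n. real (n choose (c - 2)) * (1 - p) ^ n"
  have "summable ?h" using p by (intro summable_choose) auto
  then have "summable (\<lambda>k. ?h (k + (c - 1)))" by (subst summable_iff_shift)
  then show "summable (\<lambda>k. (1 - p) ^ 2 / PP p 1 * ?h (k + (c - 1)))" by (rule summable_mult)
  fix k :: nat assume "k \<ge> 0"
  have P1: "PP p 1 > 0" using PP_pos p by simp
  have Pm: "PP p 1 \<le> PP p (k + c + 1)" using PP_mono[OF p(2)] by simp
  have e: "k + c + 1 - 2 = k + (c - 1)" using c by simp
  have pw: "(1 - p) ^ (k + c + 1) = (1 - p) ^ 2 * (1 - p) ^ (k + (c - 1))"
    using c by (simp add: power_add[symmetric])
  have nn: "0 \<le> real ((k + (c - 1)) choose (c - 2)) * (1 - p) ^ (k + c + 1)" using p by simp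
  have "Lambda_term c p (k + c + 1) \<le> real ((k + (c - 1)) choose (c - 2)) * (1 - p) ^ (k + c + 1) / PP p 1"
    unfolding Lambda_alt e using nn P1 Pm by (intro divide_left_mono) auto
  also have "\<dots> = (1 - p) ^ 2 / PP p 1 * ?h (k + (c - 1))"
    unfolding pw by simp
  finally show "norm (Lambda_term c p (k + c + 1)) \<le> (1 - p) ^ 2 / PP p 1 * ?h (k + (c - 1))"
    using Lambda_nonneg[of p "k + c + 1" c] p by simp
qed

theorem corollary4p2:
  fixes p :: real and c :: nat
  assumes "0 < p" "p < 1" "c \<ge> 2"
  shows "summable (\<lambda>k. Lambda_term c p (k + c + 1)) \<and>
    (\<lambda>n. simon_EK p n c) \<sim>[at_top]
    (\<lambda>n. p ^ (c - 1) * (Lambda_inf c p / (1 - p) ^ c + Gamma (real c) / Gamma (real c - p + 1))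
          * real n powr (1 - p))"
proof
  note p = assms(1,2) and c = assms(3)
  show sL: "summable (\<lambda>k. Lambda_term c p (k + c + 1))" using Lambda_summable[OF p c] .
  define C where "C = p ^ (c - 1) * (Lambda_inf c p / (1 - p) ^ c + Gamma (real c) / Gamma (real c - p + 1))"
  have tail: "(\<lambda>k. aa p c (k + c)) = (\<lambda>k. p ^ (c - 1) / (1 - p) ^ c * Lambda_term c p (k + c + 1))"
    using aa_tail[OF p c] by auto
  have st: "summable (\<lambda>k. aa p c (k + c))" unfolding tail using sL by (rule summable_mult)
  then have sa: "summable (aa p c)" by (subst (asm) summable_iff_shift)
  have head: "(\<Sum>i<c. aa p c i) = p ^ (c - 1) / PP p c"
  proof -
    have cc: "c = Suc (c - 1)" using c by simp
    have "(\<Sum>i<c. aa p c i) = (\<Sum>i<c - 1. aa p c i) + aa p c (c - 1)"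
      by (subst cc) (simp only: sum.lessThan_Suc)
    also have "(\<Sum>i<c - 1. aa p c i) = 0" using aa_small[OF p c] by simp
    finally show ?thesis using aa_mid[OF p c] by simp
  qed
  have "suminf (aa p c) = (\<Sum>k. aa p c (k + c)) + (\<Sum>i<c. aa p c i)"
    using sa by (rule suminf_split_initial_segment)
  also have "(\<Sum>k. aa p c (k + c)) = p ^ (c - 1) / (1 - p) ^ c * Lambda_inf c p"
    unfolding tail Lambda_inf_def using sL by (rule suminf_mult)
  finally have Leq: "suminf (aa p c) = C"
    unfolding head C_def PP_def
    by (simp add: field_simps add.commute diff_add_eq)
  have Cpos: "C > 0"
  proof -
    have "Lambda_inf c p \<ge> 0" unfolding Lambda_inf_def
      using sL Lambda_nonneg[OF p(2)] by (intro suminf_nonneg) auto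
    moreover have "Gamma (real c) > 0" "Gamma (real c - p + 1) > 0" using p c by auto
    ultimately show ?thesis unfolding C_def using p by (intro mult_pos_pos add_nonneg_pos) auto
  qed
  have lim: "(\<lambda>n. PP p n / real n powr (1 - p) * (\<Sum>t<n. aa p c t)) \<longlonglongrightarrow> 1 * C"
    using PP_lim[OF p] summable_LIMSEQ[OF sa] Leq by (intro tendsto_mult) auto
  have ev: "eventually (\<lambda>n. PP p n / real n powr (1 - p) * (\<Sum>t<n. aa p c t) = simon_EK p n c / real n powr (1 - p)) sequentially"
    using eventually_ge_at_top[of 1]
    by eventually_elim (simp add: EK_form[OF p c])
  have "(\<lambda>n. simon_EK p n c / real n powr (1 - p)) \<longlonglongrightarrow> C"
    using Lim_transform_eventually[OF lim ev] by simp
  then have "(\<lambda>n. simon_EK p n c) \<sim>[at_top] (\<lambda>n. C * real n powr (1 - p))"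
    using Cpos by (intro asymp_equivI'_const) auto
  then show "(\<lambda>n. simon_EK p n c) \<sim>[at_top]
    (\<lambda>n. p ^ (c - 1) * (Lambda_inf c p / (1 - p) ^ c + Gamma (real c) / Gamma (real c - p + 1))
          * real n powr (1 - p))" unfolding C_def .
qed


end
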